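(* A weighted game $\mathcal G$ is divergent if and only if, in each strongly connected component of the graph of $\mathcal G$, the simple cycles are either all of positive weight or all of negative weight.
   Context: A weighted game is a tuple $\langle V=V_{\mathrm{Min}}\uplus V_{\mathrm{Max}}, V_T, A, E, \omega\rangle$ with vertices $V$ split between two players, targets $V_T\subseteq V_{\mathrm{Min}}$, alphabet $A$, edges $E\subseteq V\times A\times V$ and weights $\omega\colon E\to\mathbb Z$; its graph is the directed graph $(V,E)$ (strongly connected components do not depend on the partition of vertices between players). A cycle is a finite sequence of consecutive edges $v_0\xrightarrow{a_0}v_1\cdots\xrightarrow{a_{k-1}}v_k$ with $k\geq 1$ and $v_k=v_0$; its weight is the sum of the weights of its edges; it is simple if no vertex is visited twice except $v_0=v_k$. The game is divergent if every cycle has nonzero weight. *)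

theory Defs
  imports Main
begin

text \<open>Edges are triples (source, letter, target).\<close>

definition weighted_game ::
  "'v set \<Rightarrow> 'v set \<Rightarrow> 'v set \<Rightarrow> 'a set \<Rightarrow> ('v \<times> 'a \<times> 'v) set \<Rightarrow> ('v \<times> 'a \<times> 'v \<Rightarrow> int) \<Rightarrow> bool" where
  "weighted_game VMin VMax VT A E \<omega> \<longleftrightarrow>
     VMin \<inter> VMax = {} \<and> VT \<subseteq> VMin \<and>
     E \<subseteq> (VMin \<union> VMax) \<times> A \<times> (VMin \<union> VMax)"

definition src :: "'v \<times> 'a \<times> 'v \<Rightarrow> 'v" where "src e = fst e"
definition trg :: "'v \<times> 'a \<times> 'v \<Rightarrow> 'v" where "trg e = snd (snd e)"

definition is_cycle :: "('v \<times> 'a \<times> 'v) set \<Rightarrow> ('v \<times> 'a \<times> 'v) list \<Rightarrow> bool" where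
  "is_cycle E es \<longleftrightarrow> es \<noteq> [] \<and> set es \<subseteq> E \<and>
     (\<forall>i. Suc i < length es \<longrightarrow> trg (es ! i) = src (es ! Suc i)) \<and>
     trg (last es) = src (hd es)"

definition is_simple_cycle :: "('v \<times> 'a \<times> 'v) set \<Rightarrow> ('v \<times> 'a \<times> 'v) list \<Rightarrow> bool" where
  "is_simple_cycle E es \<longleftrightarrow> is_cycle E es \<and> distinct (map src es)"

definition cycle_weight :: "('v \<times> 'a \<times> 'v \<Rightarrow> int) \<Rightarrow> ('v \<times> 'a \<times> 'v) list \<Rightarrow> int" where
  "cycle_weight \<omega> es = sum_list (map \<omega> es)"

definition divergent :: "('v \<times> 'a \<times> 'v) set \<Rightarrow> ('v \<times> 'a \<times> 'v \<Rightarrow> int) \<Rightarrow> bool" where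
  "divergent E \<omega> \<longleftrightarrow> (\<forall>es. is_cycle E es \<longrightarrow> cycle_weight \<omega> es \<noteq> 0)"

definition graph_rel :: "('v \<times> 'a \<times> 'v) set \<Rightarrow> ('v \<times> 'v) set" where
  "graph_rel E = {(u, v). \<exists>a. (u, a, v) \<in> E}"

definition sccs :: "'v set \<Rightarrow> ('v \<times> 'a \<times> 'v) set \<Rightarrow> 'v set set" where
  "sccs V E = {{v \<in> V. (u, v) \<in> (graph_rel E)\<^sup>* \<and> (v, u) \<in> (graph_rel E)\<^sup>*} | u. u \<in> V}"

end

theory Submission
  imports Defs
begin

fun walk :: "('v \<times> 'a \<times> 'v) set \<Rightarrow> 'v \<Rightarrow> ('v \<times> 'a \<times> 'v) list \<Rightarrow> 'v \<Rightarrow> bool" where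
  "walk E u [] v = (u = v)"
| "walk E u (e # es) v = (e \<in> E \<and> src e = u \<and> walk E (trg e) es v)"

lemma walk_append: "walk E u (xs @ ys) w \<longleftrightarrow> (\<exists>v. walk E u xs v \<and> walk E v ys w)"
  by (induction xs arbitrary: u) auto

lemma walk_hd: "walk E u es v \<Longrightarrow> es \<noteq> [] \<Longrightarrow> src (hd es) = u"
  by (cases es) auto

lemma walk_char: "es \<noteq> [] \<Longrightarrow> walk E u es v \<longleftrightarrow> (set es \<subseteq> E \<and> src (hd es) = u \<and> trg (last es) = v \<and>
   (\<forall>i. Suc i < length es \<longrightarrow> trg (es!i) = src (es ! Suc i)))"
proof (induction es arbitrary: u)
  case Nil
  then show ?case by simp
next
  case (Cons e es)
  show ?case
  proof (cases "es = []")
    case True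
    then show ?thesis by auto
  next
    case False
    have all: "(\<forall>i. Suc i < length (e#es) \<longrightarrow> trg ((e#es)!i) = src ((e#es) ! Suc i)) \<longleftrightarrow>
      (trg e = src (hd es) \<and> (\<forall>i. Suc i < length es \<longrightarrow> trg (es!i) = src (es ! Suc i)))"
    proof
      assume H: "\<forall>i. Suc i < length (e#es) \<longrightarrow> trg ((e#es)!i) = src ((e#es) ! Suc i)"
      have "trg e = src (hd es)" using H[rule_format, of 0] False by (simp add: hd_conv_nth)
      moreover have "\<forall>i. Suc i < length es \<longrightarrow> trg (es!i) = src (es ! Suc i)"
        using H by (metis Suc_less_eq length_Cons nth_Cons_Suc)
      ultimately show "trg e = src (hd es) \<and> (\<forall>i. Suc i < length es \<longrightarrow> trg (es!i) = src (es ! Suc i))" by simp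
    next
      assume H: "trg e = src (hd es) \<and> (\<forall>i. Suc i < length es \<longrightarrow> trg (es!i) = src (es ! Suc i))"
      show "\<forall>i. Suc i < length (e#es) \<longrightarrow> trg ((e#es)!i) = src ((e#es) ! Suc i)"
      proof (intro allI impI)
        fix i assume "Suc i < length (e#es)"
        then show "trg ((e#es)!i) = src ((e#es) ! Suc i)"
          using H False by (cases i) (auto simp: hd_conv_nth)
      qed
    qed
    show ?thesis using Cons.IH[OF False, of "trg e"] False all by auto
  qed
qed

lemma cycle_walk: "is_cycle E es \<longleftrightarrow> es \<noteq> [] \<and> walk E (src (hd es)) es (src (hd es))"
proof (cases "es = []")
  case True
  then show ?thesis by (simp add: is_cycle_def)
next
  case False
  show ?thesis unfolding is_cycle_def
    by (subst walk_char[OF False]) (use False in auto)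
qed

lemma weight_append: "cycle_weight \<omega> (xs @ ys) = cycle_weight \<omega> xs + cycle_weight \<omega> ys"
  by (simp add: cycle_weight_def)

lemma walk_rep: "walk E v c v \<Longrightarrow> walk E v (concat (replicate n c)) v"
  by (induction n) (auto simp: walk_append)

lemma weight_rep: "cycle_weight \<omega> (concat (replicate n c)) = int n * cycle_weight \<omega> c"
  by (induction n) (auto simp: cycle_weight_def algebra_simps)

lemma split3:
  assumes "map f c = xs @ [y] @ ys @ [y] @ zs"
  shows "\<exists>c1 e1 c2 e2 c3. c = c1 @ e1 # c2 @ e2 # c3 \<and> f e1 = y \<and> f e2 = y"
proof -
  obtain c1 r where "c = c1 @ r" "map f r = [y] @ ys @ [y] @ zs"
    using assms by (auto simp: map_eq_append_conv)
  then obtain e1 r2 where r: "r = e1 # r2" "f e1 = y" "map f r2 = ys @ [y] @ zs"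
    by (auto simp: map_eq_Cons_conv)
  then obtain c2 r3 where "r2 = c2 @ r3" "map f r3 = [y] @ zs"
    by (auto simp: map_eq_append_conv)
  then obtain e2 c3 where "r3 = e2 # c3" "f e2 = y"
    by (auto simp: map_eq_Cons_conv)
  show ?thesis using \<open>c = c1 @ r\<close> r \<open>r2 = c2 @ r3\<close> \<open>r3 = e2 # c3\<close> \<open>f e2 = y\<close> by blast
qed

lemma decomp:
  assumes add: "\<And>x y. P x \<Longrightarrow> P y \<Longrightarrow> P (x + y)"
  shows "walk E v c v \<Longrightarrow> c \<noteq> [] \<Longrightarrow>
    (\<forall>s. is_simple_cycle E s \<and> set (map src s) \<subseteq> set (map src c) \<longrightarrow> P (cycle_weight \<omega> s))
    \<Longrightarrow> P (cycle_weight \<omega> c)"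
proof (induction "length c" arbitrary: c v rule: less_induct)
  case less
  show ?case
  proof (cases "distinct (map src c)")
    case True
    have "src (hd c) = v" using walk_hd[OF less.prems(1) less.prems(2)] .
    then have "is_simple_cycle E c" using True less.prems
      by (simp add: is_simple_cycle_def cycle_walk)
    then show ?thesis using less.prems by blast
  next
    case False
    then obtain xs y ys zs where ms: "map src c = xs @ [y] @ ys @ [y] @ zs"
      using not_distinct_decomp by blast
    then obtain c1 e1 c2 e2 c3 where c: "c = c1 @ e1 # c2 @ e2 # c3" and s: "src e1 = y" "src e2 = y"
      using split3[OF ms] by blast
    from less.prems(1) c obtain a b where w1: "walk E v c1 a" and w2: "walk E a (e1 # c2) b"
      and w3: "walk E b (e2 # c3) v"
      by (auto simp: walk_append simp del: walk.simps(2)) (metis walk_append append_Cons)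
    have ab: "a = y" "b = y" using w2 w3 s by auto
    have Y: "walk E y (e1 # c2) y" using w2 ab by simp
    have Z: "walk E v (c1 @ e2 # c3) v" using w1 w3 ab walk_append by fast
    have wc: "cycle_weight \<omega> c = cycle_weight \<omega> (e1 # c2) + cycle_weight \<omega> (c1 @ e2 # c3)"
      using c by (simp add: cycle_weight_def)
    have sY: "set (map src (e1 # c2)) \<subseteq> set (map src c)" using c by auto
    have sZ: "set (map src (c1 @ e2 # c3)) \<subseteq> set (map src c)" using c by auto
    have lY: "length (e1 # c2) < length c" using c by simp
    have lZ: "length (c1 @ e2 # c3) < length c" using c by simp
    have hY: "\<forall>s. is_simple_cycle E s \<and> set (map src s) \<subseteq> set (map src (e1 # c2)) \<longrightarrow> P (cycle_weight \<omega> s)"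
      using less.prems(3) sY by (meson order_trans)
    have hZ: "\<forall>s. is_simple_cycle E s \<and> set (map src s) \<subseteq> set (map src (c1 @ e2 # c3)) \<longrightarrow> P (cycle_weight \<omega> s)"
      using less.prems(3) sZ by (meson order_trans)
    have PY: "P (cycle_weight \<omega> (e1 # c2))"
      by (rule less.hyps[OF lY Y _ hY]) simp
    have PZ: "P (cycle_weight \<omega> (c1 @ e2 # c3))"
      by (rule less.hyps[OF lZ Z _ hZ]) simp
    show ?thesis using wc PY PZ add by simp
  qed
qed

lemma walk_rtrancl: "walk E u es v \<Longrightarrow> (u, v) \<in> (graph_rel E)\<^sup>*"
proof (induction es arbitrary: u)
  case Nil then show ?case by simp
next
  case (Cons e es)
  then have "(u, trg e) \<in> graph_rel E"
    by (cases e) (auto simp: graph_rel_def src_def trg_def)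
  then show ?case using Cons by (meson converse_rtrancl_into_rtrancl walk.simps(2))
qed

lemma rtrancl_walk: "(u, v) \<in> (graph_rel E)\<^sup>* \<Longrightarrow> \<exists>p. walk E u p v"
proof (induction rule: rtrancl_induct)
  case base
  then show ?case using walk.simps(1) by metis
next
  case (step y z)
  then obtain p a where "walk E u p y" "(y, a, z) \<in> E" by (auto simp: graph_rel_def)
  then have "walk E u (p @ [(y, a, z)]) z" by (auto simp: walk_append src_def trg_def)
  then show ?case by blast
qed

lemma on_walk: "walk E u es w \<Longrightarrow> e \<in> set es \<Longrightarrow>
  (u, src e) \<in> (graph_rel E)\<^sup>* \<and> (src e, w) \<in> (graph_rel E)\<^sup>*"
proof -
  assume w: "walk E u es w" and e: "e \<in> set es"
  then obtain xs ys where "es = xs @ e # ys" by (meson split_list)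
  with w obtain m where "walk E u xs m" "walk E m (e # ys) w" by (auto simp: walk_append)
  then show ?thesis using walk_rtrancl by fastforce
qed

lemma coeffs:
  fixes wp wn d :: int
  assumes "wp > 0" "wn < 0"
  shows "\<exists>a b :: nat. a \<ge> 1 \<and> int a * wp + int b * wn + (wp * (- wn)) * d = 0"
proof (cases "d \<ge> 0")
  case True
  show ?thesis
    apply (rule exI[of _ "nat (- wn)"], rule exI[of _ "nat (wp + wp * d)"])
    using assms True by (simp add: algebra_simps)
next
  case False
  show ?thesis
    apply (rule exI[of _ "nat (- wn + wn * d)"], rule exI[of _ "nat wp"])
    using assms False mult_neg_neg[of d wn] by (simp add: algebra_simps)
qed

theorem proposition1:
  fixes VMin VMax VT :: "'v set" and A :: "'a set"
    and E :: "('v \<times> 'a \<times> 'v) set" and \<omega> :: "'v \<times> 'a \<times> 'v \<Rightarrow> int"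
  assumes "weighted_game VMin VMax VT A E \<omega>"
  shows "divergent E \<omega> \<longleftrightarrow>
    (\<forall>C \<in> sccs (VMin \<union> VMax) E.
       (\<forall>c. is_simple_cycle E c \<and> set (map src c) \<subseteq> C \<longrightarrow> cycle_weight \<omega> c > 0) \<or>
       (\<forall>c. is_simple_cycle E c \<and> set (map src c) \<subseteq> C \<longrightarrow> cycle_weight \<omega> c < 0))"
proof
  let ?R = "(graph_rel E)\<^sup>*"
  assume div: "divergent E \<omega>"
  show "\<forall>C \<in> sccs (VMin \<union> VMax) E.
       (\<forall>c. is_simple_cycle E c \<and> set (map src c) \<subseteq> C \<longrightarrow> cycle_weight \<omega> c > 0) \<or>
       (\<forall>c. is_simple_cycle E c \<and> set (map src c) \<subseteq> C \<longrightarrow> cycle_weight \<omega> c < 0)"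
  proof (rule ballI, rule ccontr)
    fix C assume C: "C \<in> sccs (VMin \<union> VMax) E"
    then obtain u where Cu: "C = {v \<in> VMin \<union> VMax. (u, v) \<in> ?R \<and> (v, u) \<in> ?R}"
      by (auto simp: sccs_def)
    assume "\<not> ((\<forall>c. is_simple_cycle E c \<and> set (map src c) \<subseteq> C \<longrightarrow> cycle_weight \<omega> c > 0) \<or>
       (\<forall>c. is_simple_cycle E c \<and> set (map src c) \<subseteq> C \<longrightarrow> cycle_weight \<omega> c < 0))"
    then obtain N P where N: "is_simple_cycle E N" "set (map src N) \<subseteq> C" "cycle_weight \<omega> N \<le> 0"
      and P: "is_simple_cycle E P" "set (map src P) \<subseteq> C" "cycle_weight \<omega> P \<ge> 0"
      by force
    have cN: "is_cycle E N" and cP: "is_cycle E P" using N P by (auto simp: is_simple_cycle_def)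
    define wn where "wn = cycle_weight \<omega> N"
    define wp where "wp = cycle_weight \<omega> P"
    have wn: "wn < 0" using div cN N(3) unfolding divergent_def wn_def by force
    have wp: "wp > 0" using div cP P(3) unfolding divergent_def wp_def by force
    define vn where "vn = src (hd N)"
    define vp where "vp = src (hd P)"
    have Nw: "walk E vn N vn" "N \<noteq> []" using cN by (auto simp: cycle_walk vn_def)
    have Pw: "walk E vp P vp" "P \<noteq> []" using cP by (auto simp: cycle_walk vp_def)
    have "vn \<in> C" using N(2) Nw(2) unfolding vn_def by (cases N) auto
    moreover have "vp \<in> C" using P(2) Pw(2) unfolding vp_def by (cases P) auto
    ultimately have "(vp, vn) \<in> ?R" "(vn, vp) \<in> ?R" using Cu by (auto intro: rtrancl_trans)
    then obtain p q where p: "walk E vp p vn" and q: "walk E vn q vp"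
      using rtrancl_walk by metis
    define d where "d = cycle_weight \<omega> (p @ q)"
    define m where "m = nat (wp * (- wn))"
    have m1: "m \<ge> 1" using wp wn unfolding m_def using mult_pos_neg[of wp wn] by simp
    obtain a b :: nat where ab: "a \<ge> 1" "int a * wp + int b * wn + (wp * (- wn)) * d = 0"
      using coeffs[OF wp wn] by blast
    define W where "W = concat (replicate a P) @ p @ concat (replicate b N) @ q @
      concat (replicate (m - 1) (p @ q))"
    have pq: "walk E vp (p @ q) vp" using p q walk_append by fast
    have wW: "walk E vp W vp" unfolding W_def
      using walk_rep[OF Pw(1), of a] walk_rep[OF Nw(1), of b] walk_rep[OF pq, of "m - 1"] p q
      by (auto simp: walk_append)
    have neW: "W \<noteq> []" using ab(1) Pw(2) unfolding W_def by (cases a) auto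
    have hW: "src (hd W) = vp" using walk_hd[OF wW neW] .
    have cW: "is_cycle E W" using wW neW hW by (simp add: cycle_walk)
    have "cycle_weight \<omega> W = int a * wp + int b * wn + d + int (m - 1) * d"
      unfolding W_def by (simp add: weight_append weight_rep wp_def wn_def d_def)
    also have "\<dots> = int a * wp + int b * wn + int m * d"
      using m1 by (simp add: of_nat_diff algebra_simps)
    also have "\<dots> = 0"
    proof -
      have im: "int m = wp * (- wn)" unfolding m_def using mult_pos_neg[of wp wn] wp wn by simp
      show ?thesis unfolding im by (rule ab(2))
    qed
    finally show False using div cW unfolding divergent_def by blast
  qed
next
  let ?R = "(graph_rel E)\<^sup>*"
  assume H: "\<forall>C \<in> sccs (VMin \<union> VMax) E.
       (\<forall>c. is_simple_cycle E c \<and> set (map src c) \<subseteq> C \<longrightarrow> cycle_weight \<omega> c > 0) \<or>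
       (\<forall>c. is_simple_cycle E c \<and> set (map src c) \<subseteq> C \<longrightarrow> cycle_weight \<omega> c < 0)"
  show "divergent E \<omega>" unfolding divergent_def
  proof (intro allI impI)
    fix c assume cc: "is_cycle E c"
    define u where "u = src (hd c)"
    have w: "walk E u c u" "c \<noteq> []" using cc by (auto simp: cycle_walk u_def)
    have EV: "E \<subseteq> (VMin \<union> VMax) \<times> A \<times> (VMin \<union> VMax)"
      using assms by (simp add: weighted_game_def)
    have uV: "u \<in> VMin \<union> VMax" using w EV unfolding u_def src_def by (cases c) auto
    define C where "C = {v \<in> VMin \<union> VMax. (u, v) \<in> ?R \<and> (v, u) \<in> ?R}"
    have CS: "C \<in> sccs (VMin \<union> VMax) E" unfolding C_def sccs_def using uV by blast
    have sub: "set (map src c) \<subseteq> C"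
    proof
      fix x assume "x \<in> set (map src c)"
      then obtain e where e: "e \<in> set c" "x = src e" by auto
      have "e \<in> E" using cc e(1) by (auto simp: is_cycle_def)
      then have "x \<in> VMin \<union> VMax" using EV e(2) unfolding src_def by auto
      then show "x \<in> C" using on_walk[OF w(1) e(1)] e(2) unfolding C_def by auto
    qed
    from H CS show "cycle_weight \<omega> c \<noteq> 0"
    proof
      assume pos: "(\<forall>c. is_simple_cycle E c \<and> set (map src c) \<subseteq> C \<longrightarrow> cycle_weight \<omega> c > 0) \<or>
       (\<forall>c. is_simple_cycle E c \<and> set (map src c) \<subseteq> C \<longrightarrow> cycle_weight \<omega> c < 0)"
      then show ?thesis
      proof
        assume a: "\<forall>c. is_simple_cycle E c \<and> set (map src c) \<subseteq> C \<longrightarrow> cycle_weight \<omega> c > 0"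
        have "cycle_weight \<omega> c > 0"
          using decomp[of "\<lambda>x. x > (0::int)", OF _ w] a sub by fastforce
        then show ?thesis by simp
      next
        assume a: "\<forall>c. is_simple_cycle E c \<and> set (map src c) \<subseteq> C \<longrightarrow> cycle_weight \<omega> c < 0"
        have "cycle_weight \<omega> c < 0"
          using decomp[of "\<lambda>x. x < (0::int)", OF _ w] a sub by fastforce
        then show ?thesis by simp
      qed
    qed
  qed
qed

end
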